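(* Let $n=2m$ be even and $1\le i\le m-1$. Let \[ \psi_{2i+1,1}=\sum_{\substack{I\subseteq\{1,\dots,n\},\ |I|=m-i-1\\ j\in\{1,\dots,n\}}}e_I\wedge f_I\wedge f_j\otimes e_j\ \in\ \wedge^{n-2i-1}V\otimes\Delta_- . \] Then the projection of $\psi_{2i+1,1}$ onto the Cartan component $V_{\omega_{n-1}+\omega_{n-2i-1}}\subset\wedge^{n-2i-1}V\otimes\Delta_-$ is zero.
   Context: Let $V$ be a complex vector space of dimension $2n$ with a nondegenerate symmetric bilinear form $q$, $V=E\oplus F$ with $E,F$ maximal isotropic, bases $e_1,\dots,e_n$ of $E$ and $f_1,\dots,f_n$ of $F$ with $q(e_i,f_j)=\delta_{ij}$. For $I=\{i_1<\dots<i_k\}$, $e_I=e_{i_1}\wedge\cdots\wedge e_{i_k}$ and $f_I=f_{i_1}\wedge\cdots\wedge f_{i_k}$. $\mathrm{Spin}(V)$ is of type $D_n$ with fundamental weights $\omega_1,\dots,\omega_n$ (Bourbaki), $\omega_0:=0$; $V_\lambda$ denotes the irreducible module of highest weight $\lambda$; $\wedge^kV=V_{\omega_k}$ for $k\le n-2$. For $n$ even, $\Delta_+=\wedge^{\mathrm{even}}E=V_{\omega_n}$ and $\Delta_-=\wedge^{\mathrm{odd}}E=V_{\omega_{n-1}}$ (half-spin representations, with the $Cl(V)$-module structure on $\wedge E$ in which $v=v'+v''\in E\oplus F$ acts by $o(v')+2i(v'')$). The Cartan component of $V_\lambda\otimes V_\mu$ is the unique irreducible submodule of highest weight $\lambda+\mu$.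 *)

theory Defs
  imports Main "HOL.Complex"
begin

text \<open>Concrete model.  n = dim E.  Basis of V is indexed by 1..2n:
  index a (1 \<le> a \<le> n) is e_a, index n+a is f_a.  An element of the exterior
  algebra over an ordered basis is a coefficient function on finite sets of indices:
  alpha S is the coefficient of e_S = e_{s1} wedge ... wedge e_{sk} (s1 < ... < sk).
  The half-spin module Delta_- = wedge^odd E uses indices 1..n.
  Elements of wedge^k V tensor Delta_- are functions on pairs (S,T):
  the coefficient of e_S tensor e_T.\<close>

definition sgnb :: "nat \<Rightarrow> nat set \<Rightarrow> complex" where
  "sgnb c A = (-1) ^ card {a\<in>A. a < c}"

definition ext :: "nat \<Rightarrow> (nat set \<Rightarrow> complex) \<Rightarrow> (nat set \<Rightarrow> complex)" where
  "ext c \<alpha> = (\<lambda>S. if c \<in> S then sgnb c (S - {c}) * \<alpha> (S - {c}) else 0)"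

definition ctr :: "nat \<Rightarrow> (nat set \<Rightarrow> complex) \<Rightarrow> (nat set \<Rightarrow> complex)" where
  "ctr c \<alpha> = (\<lambda>S. if c \<notin> S then sgnb c S * \<alpha> (insert c S) else 0)"

text \<open>q-partner index: q(e_a,f_a) = 1\<close>
definition pt :: "nat \<Rightarrow> nat \<Rightarrow> nat" where
  "pt n a = (if a \<le> n then a + n else a - n)"

text \<open>Element X_{a,b} of so(V): v |-> q(b,v) a - q(a,v) b (for basis vectors a, b);
  these span so(V).  Its (derivation) action on wedge V:\<close>
definition rhoV :: "nat \<Rightarrow> nat \<Rightarrow> nat \<Rightarrow> (nat set \<Rightarrow> complex) \<Rightarrow> (nat set \<Rightarrow> complex)" where
  "rhoV n a b \<alpha> = (\<lambda>S. ext a (ctr (pt n b) \<alpha>) S - ext b (ctr (pt n a) \<alpha>) S)"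

text \<open>Clifford action on wedge E: e_c acts by exterior multiplication, f_c by 2 times
  contraction (v = v' + v'' acts by o(v') + 2 i(v''))\<close>
definition clif :: "nat \<Rightarrow> nat \<Rightarrow> (nat set \<Rightarrow> complex) \<Rightarrow> (nat set \<Rightarrow> complex)" where
  "clif n c \<beta> = (if c \<le> n then ext c \<beta> else (\<lambda>T. 2 * ctr (c - n) \<beta> T))"

definition rhoS :: "nat \<Rightarrow> nat \<Rightarrow> nat \<Rightarrow> (nat set \<Rightarrow> complex) \<Rightarrow> (nat set \<Rightarrow> complex)" where
  "rhoS n a b \<beta> = (\<lambda>T. (clif n a (clif n b \<beta>) T - clif n b (clif n a \<beta>) T) / 4)"

definition act :: "nat \<Rightarrow> nat \<Rightarrow> nat \<Rightarrow> (nat set \<times> nat set \<Rightarrow> complex) \<Rightarrow> (nat set \<times> nat set \<Rightarrow> complex)" where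
  "act n a b w = (\<lambda>(S,T). rhoV n a b (\<lambda>S'. w (S',T)) S + rhoS n a b (\<lambda>T'. w (S,T')) T)"

definition Wmod :: "nat \<Rightarrow> nat \<Rightarrow> (nat set \<times> nat set \<Rightarrow> complex) set" where
  "Wmod n k = {w. \<forall>S T. w (S,T) \<noteq> 0 \<longrightarrow>
       S \<subseteq> {1..2*n} \<and> card S = k \<and> T \<subseteq> {1..n} \<and> odd (card T)}"

definition subsp :: "('x \<Rightarrow> complex) set \<Rightarrow> bool" where
  "subsp C \<longleftrightarrow> (\<lambda>_. 0) \<in> C \<and> (\<forall>x\<in>C. \<forall>y\<in>C. (\<lambda>z. x z + y z) \<in> C)
               \<and> (\<forall>c. \<forall>x\<in>C. (\<lambda>z. c * x z) \<in> C)"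

definition invariant :: "nat \<Rightarrow> (nat set \<times> nat set \<Rightarrow> complex) set \<Rightarrow> bool" where
  "invariant n C \<longleftrightarrow> (\<forall>a\<in>{1..2*n}. \<forall>b\<in>{1..2*n}. \<forall>x\<in>C. act n a b x \<in> C)"

text \<open>Fundamental weights of D_n (Bourbaki) in epsilon-coordinates,
  epsilon_j being the weight of e_j; omega_0 = 0.\<close>
definition omegaD :: "nat \<Rightarrow> nat \<Rightarrow> nat \<Rightarrow> complex" where
  "omegaD n k j = (if k \<le> n - 2 then (if j \<le> k then 1 else 0)
                   else if k = n - 1 then (if j < n then 1/2 else -1/2)
                   else 1/2)"

text \<open>highest weight vector of weight lam: a nonzero weight vector (Cartan subalgebra
  spanned by H_j = X_{e_j,f_j}) annihilated by all positive root vectors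
  X_{e_a,f_b}, X_{e_a,e_b} (a < b).\<close>
definition hw_vector :: "nat \<Rightarrow> (nat \<Rightarrow> complex) \<Rightarrow> (nat set \<times> nat set \<Rightarrow> complex) \<Rightarrow> bool" where
  "hw_vector n lam v \<longleftrightarrow> v \<noteq> (\<lambda>_. 0)
     \<and> (\<forall>j\<in>{1..n}. act n j (n + j) v = (\<lambda>z. lam j * v z))
     \<and> (\<forall>a\<in>{1..n}. \<forall>b\<in>{1..n}. a < b \<longrightarrow>
           act n a (n + b) v = (\<lambda>_. 0) \<and> act n a b v = (\<lambda>_. 0))"

definition irred_hw_submodule :: "nat \<Rightarrow> nat \<Rightarrow> (nat \<Rightarrow> complex) \<Rightarrow> (nat set \<times> nat set \<Rightarrow> complex) set \<Rightarrow> bool" where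
  "irred_hw_submodule n k lam C \<longleftrightarrow> C \<subseteq> Wmod n k \<and> subsp C \<and> invariant n C
     \<and> C \<noteq> {\<lambda>_. 0}
     \<and> (\<forall>D. subsp D \<and> D \<subseteq> C \<and> invariant n D \<longrightarrow> D = {\<lambda>_. 0} \<or> D = C)
     \<and> (\<exists>v\<in>C. hw_vector n lam v)"

text \<open>Cartan component of wedge^k V tensor Delta_- = V_{omega_k} tensor V_{omega_{n-1}}\<close>
definition cartan_component :: "nat \<Rightarrow> nat \<Rightarrow> (nat set \<times> nat set \<Rightarrow> complex) set \<Rightarrow> bool" where
  "cartan_component n k C \<longleftrightarrow>
     irred_hw_submodule n k (\<lambda>j. omegaD n (n - 1) j + omegaD n k j) C"

definition equiv_proj :: "nat \<Rightarrow> nat \<Rightarrow> (nat set \<times> nat set \<Rightarrow> complex) set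
     \<Rightarrow> ((nat set \<times> nat set \<Rightarrow> complex) \<Rightarrow> (nat set \<times> nat set \<Rightarrow> complex)) \<Rightarrow> bool" where
  "equiv_proj n k C p \<longleftrightarrow>
     (\<forall>x\<in>Wmod n k. \<forall>y\<in>Wmod n k. \<forall>c.
         p (\<lambda>z. x z + y z) = (\<lambda>z. p x z + p y z) \<and> p (\<lambda>z. c * x z) = (\<lambda>z. c * p x z))
     \<and> (\<forall>x\<in>Wmod n k. p x \<in> C) \<and> (\<forall>x\<in>C. p x = x)
     \<and> (\<forall>a\<in>{1..2*n}. \<forall>b\<in>{1..2*n}. \<forall>x\<in>Wmod n k. p (act n a b x) = act n a b (p x))"

definition wedge_list :: "nat list \<Rightarrow> (nat set \<Rightarrow> complex)" where
  "wedge_list xs = foldr ext xs (\<lambda>S. if S = {} then 1 else 0)"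

definition psi :: "nat \<Rightarrow> nat \<Rightarrow> nat \<Rightarrow> (nat set \<times> nat set \<Rightarrow> complex)" where
  "psi n m i = (\<lambda>(S,T). \<Sum>I\<in>{I. I \<subseteq> {1..n} \<and> card I = m - i - 1}. \<Sum>j\<in>{1..n}.
      wedge_list (sorted_list_of_set I @ map (\<lambda>x. x + n) (sorted_list_of_set I) @ [n + j]) S
      * (if T = {j} then 1 else 0))"

end

theory Submission
  imports Defs
begin



lemma sgnb_sq[simp]: "sgnb c A * sgnb c A = 1"
  unfolding sgnb_def by (simp add: power_mult_distrib[symmetric] flip: power_add mult_2)

lemma fin_lt: "finite {a\<in>A. a < (c::nat)}"
  by (rule finite_subset[of _ "{..<c}"]) auto

lemma sgnb_insert: "x \<notin> A \<Longrightarrow> sgnb c (insert x A) = (if x < c then - sgnb c A else sgnb c A)"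
proof -
  assume x: "x \<notin> A"
  show ?thesis
  proof (cases "x < c")
    case True
    have "{a\<in>insert x A. a < c} = insert x {a\<in>A. a < c}" using True by auto
    then show ?thesis using True x fin_lt[of A c] by (simp add: sgnb_def)
  next
    case False
    have "{a\<in>insert x A. a < c} = {a\<in>A. a < c}" using False by auto
    then show ?thesis using False by (simp add: sgnb_def)
  qed
qed

lemma sgnb_remove: "x \<in> A \<Longrightarrow> sgnb c A = (if x < c then - sgnb c (A - {x}) else sgnb c (A - {x}))"
  using sgnb_insert[of x "A - {x}" c] by (simp add: insert_absorb)

lemma ext_ext: "ext a (ext b \<alpha>) S = - ext b (ext a \<alpha>) S"
proof (cases "a = b")
  case True then show ?thesis by (simp add: ext_def)
next
  case False
  show ?thesis
  proof (cases "a \<in> S \<and> b \<in> S")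
    case True
    have e: "S - {a} - {b} = S - {b} - {a}" by auto
    have s1: "sgnb a (S - {a}) = (if b < a then - sgnb a (S - {b} - {a}) else sgnb a (S - {b} - {a}))"
      using sgnb_remove[of b "S - {a}" a] True False e by auto
    have s2: "sgnb b (S - {b}) = (if a < b then - sgnb b (S - {a} - {b}) else sgnb b (S - {a} - {b}))"
      using sgnb_remove[of a "S - {b}" b] True False e by auto
    show ?thesis using True False s1 s2 e by (auto simp: ext_def)
  next
    case False then show ?thesis by (auto simp: ext_def)
  qed
qed

lemma ctr_ctr: "ctr a (ctr b \<alpha>) S = - ctr b (ctr a \<alpha>) S"
proof (cases "a = b")
  case True then show ?thesis by (simp add: ctr_def)
next
  case False
  show ?thesis
  proof (cases "a \<notin> S \<and> b \<notin> S")
    case True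
    have e: "insert b (insert a S) = insert a (insert b S)" by auto
    have s1: "sgnb a (insert b S) = (if b < a then - sgnb a S else sgnb a S)"
      using sgnb_insert[of b S a] True by auto
    have s2: "sgnb b (insert a S) = (if a < b then - sgnb b S else sgnb b S)"
      using sgnb_insert[of a S b] True by auto
    show ?thesis using True False s1 s2 e by (auto simp: ctr_def)
  next
    case False then show ?thesis by (auto simp: ctr_def)
  qed
qed

lemma ctr_ext: "ctr a (ext b \<alpha>) S + ext b (ctr a \<alpha>) S = (if a = b then \<alpha> S else 0)"
proof (cases "a = b")
  case True
  then show ?thesis by (cases "a \<in> S") (auto simp: ext_def ctr_def insert_absorb)
next
  case False
  show ?thesis
  proof (cases "a \<notin> S \<and> b \<in> S")
    case True
    have e: "insert a S - {b} = insert a (S - {b})" using False by auto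
    have s1: "sgnb a S = (if b < a then - sgnb a (S - {b}) else sgnb a (S - {b}))"
      using sgnb_remove[of b S a] True by auto
    have s2: "sgnb b (insert a S - {b}) = (if a < b then - sgnb b (S - {b}) else sgnb b (S - {b}))"
      using sgnb_insert[of a "S - {b}" b] True e by auto
    show ?thesis using True False s1 s2 e by (auto simp: ext_def ctr_def)
  next
    case F2: False then show ?thesis using False by (auto simp: ext_def ctr_def)
  qed
qed




definition lin :: "(('x \<Rightarrow> complex) \<Rightarrow> ('y \<Rightarrow> complex)) \<Rightarrow> bool" where
  "lin A \<longleftrightarrow> (\<forall>f g a b. A (\<lambda>x. a * f x + b * g x) = (\<lambda>x. a * A f x + b * A g x))"

lemma lin_zero: "lin A \<Longrightarrow> A (\<lambda>x. 0) = (\<lambda>x. 0)"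
  unfolding lin_def by (drule spec[of _ "\<lambda>x. 0"], drule spec[of _ "\<lambda>x. 0"], drule spec[of _ 0], drule spec[of _ 0]) simp

lemma lin_add: "lin A \<Longrightarrow> A (\<lambda>x. f x + g x) = (\<lambda>x. A f x + A g x)"
  unfolding lin_def by (drule spec[of _ f], drule spec[of _ g], drule spec[of _ 1], drule spec[of _ 1]) simp

lemma lin_diff: "lin A \<Longrightarrow> A (\<lambda>x. f x - g x) = (\<lambda>x. A f x - A g x)"
  unfolding lin_def by (drule spec[of _ f], drule spec[of _ g], drule spec[of _ 1], drule spec[of _ "-1"]) simp

lemma lin_scal: "lin A \<Longrightarrow> A (\<lambda>x. c * f x) = (\<lambda>x. c * A f x)"
  unfolding lin_def by (drule spec[of _ f], drule spec[of _ f], drule spec[of _ c], drule spec[of _ 0]) simp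

lemma lin_div: "lin A \<Longrightarrow> A (\<lambda>x. f x / c) = (\<lambda>x. A f x / c)"
  using lin_scal[of A "1/c" f] by simp

lemma lin_neg: "lin A \<Longrightarrow> A (\<lambda>x. - f x) = (\<lambda>x. - A f x)"
  using lin_scal[of A "-1" f] by simp

lemma lin_sum: "lin A \<Longrightarrow> A (\<lambda>x. \<Sum>i\<in>I. f i x) = (\<lambda>x. \<Sum>i\<in>I. A (f i) x)"
proof (induction I rule: infinite_finite_induct)
  case (infinite A) then show ?case by (simp add: lin_zero)
next
  case empty then show ?case by (simp add: lin_zero)
next
  case (insert i I)
  have "A (\<lambda>x. f i x + (\<Sum>i\<in>I. f i x)) = (\<lambda>x. A (f i) x + A (\<lambda>x. \<Sum>i\<in>I. f i x) x)"
    by (rule lin_add[OF insert.prems])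
  then show ?case using insert by simp
qed

lemma lin_ext: "lin (ext c)" unfolding lin_def by (auto simp: ext_def fun_eq_iff algebra_simps)
lemma lin_ctr: "lin (ctr c)" unfolding lin_def by (auto simp: ctr_def fun_eq_iff algebra_simps)
lemma lin_clif: "lin (clif n c)" unfolding lin_def clif_def by (auto simp: ext_def ctr_def fun_eq_iff algebra_simps)
lemma lin_comp: "lin A \<Longrightarrow> lin B \<Longrightarrow> lin (\<lambda>f. A (B f))" unfolding lin_def by simp
lemma lin_rhoV: "lin (rhoV n a b)"
  unfolding lin_def rhoV_def by (simp add: lin_add[OF lin_ext] lin_add[OF lin_ctr] lin_scal[OF lin_ext] lin_scal[OF lin_ctr] algebra_simps)
lemma lin_rhoS: "lin (rhoS n a b)"
  unfolding lin_def rhoS_def by (simp add: lin_add[OF lin_clif] lin_scal[OF lin_clif] algebra_simps diff_divide_distrib add_divide_distrib)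

lemmas linext = lin_add[OF lin_ext] lin_diff[OF lin_ext] lin_scal[OF lin_ext] lin_neg[OF lin_ext] lin_zero[OF lin_ext] lin_sum[OF lin_ext] lin_div[OF lin_ext]
lemmas linctr = lin_add[OF lin_ctr] lin_diff[OF lin_ctr] lin_scal[OF lin_ctr] lin_neg[OF lin_ctr] lin_zero[OF lin_ctr] lin_sum[OF lin_ctr] lin_div[OF lin_ctr]
lemmas linclif = lin_add[OF lin_clif] lin_diff[OF lin_clif] lin_scal[OF lin_clif] lin_neg[OF lin_clif] lin_zero[OF lin_clif] lin_sum[OF lin_clif] lin_div[OF lin_clif]

lemma ctr_ext_fun: "ctr a (ext b \<alpha>) = (\<lambda>S. (if a = b then \<alpha> S else 0) - ext b (ctr a \<alpha>) S)"
  using ctr_ext[of a b \<alpha>] by (auto simp: fun_eq_iff algebra_simps)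

lemma ext_ext_fun: "ext a (ext b \<alpha>) = (\<lambda>S. - ext b (ext a \<alpha>) S)"
  using ext_ext[of a b \<alpha>] by auto

lemma if_fun_ext: "ext a (\<lambda>S. if P then \<alpha> S else 0) = (\<lambda>S. if P then ext a \<alpha> S else 0)"
  by (auto simp: ext_def fun_eq_iff)

lemma rhoV_ext: "rhoV n a b (ext c \<alpha>) S = ext c (rhoV n a b \<alpha>) S
   + (if c = pt n b then ext a \<alpha> S else 0) - (if c = pt n a then ext b \<alpha> S else 0)"
proof -
  have "rhoV n a b (ext c \<alpha>) S = ext a (ctr (pt n b) (ext c \<alpha>)) S - ext b (ctr (pt n a) (ext c \<alpha>)) S"
    by (simp add: rhoV_def)
  also have "ext a (ctr (pt n b) (ext c \<alpha>)) S = (if c = pt n b then ext a \<alpha> S else 0) + ext c (ext a (ctr (pt n b) \<alpha>)) S"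
    unfolding ctr_ext_fun by (auto simp: linext if_fun_ext ext_ext[of a c])
  also have "ext b (ctr (pt n a) (ext c \<alpha>)) S = (if c = pt n a then ext b \<alpha> S else 0) + ext c (ext b (ctr (pt n a) \<alpha>)) S"
    unfolding ctr_ext_fun by (auto simp: linext if_fun_ext ext_ext[of b c])
  finally show ?thesis by (simp add: rhoV_def linext)
qed




lemma pt_range: "a \<in> {1..2*n} \<Longrightarrow> pt n a \<in> {1..2*n}" by (auto simp: pt_def)
lemma pt_pt: "a \<in> {1..2*n} \<Longrightarrow> pt n (pt n a) = a" by (auto simp: pt_def)
lemma pt_inj: "a \<in> {1..2*n} \<Longrightarrow> b \<in> {1..2*n} \<Longrightarrow> pt n a = pt n b \<longleftrightarrow> a = b"
  by (auto simp: pt_def split: if_splits)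

lemma if_fun_clif: "clif n a (\<lambda>S. if P then c * \<alpha> S else 0) = (\<lambda>S. if P then c * clif n a \<alpha> S else 0)"
  by (auto simp: clif_def ext_def ctr_def fun_eq_iff)

lemma clif_anti: assumes "a \<in> {1..2*n}" "b \<in> {1..2*n}"
  shows "clif n a (clif n b \<beta>) T + clif n b (clif n a \<beta>) T = (if b = pt n a then 2 * \<beta> T else 0)"
proof (cases "a \<le> n")
  case a: True
  show ?thesis
  proof (cases "b \<le> n")
    case True
    then show ?thesis using a assms ext_ext[of a b \<beta> T] by (auto simp: clif_def pt_def)
  next
    case False
    have "clif n a (clif n b \<beta>) T + clif n b (clif n a \<beta>) T
        = 2 * (ctr (b - n) (ext a \<beta>) T + ext a (ctr (b - n) \<beta>) T)"
      using a False by (simp add: clif_def linext algebra_simps)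
    also have "\<dots> = (if b = pt n a then 2 * \<beta> T else 0)"
      using ctr_ext[of "b-n" a \<beta> T] a False by (auto simp: pt_def)
    finally show ?thesis .
  qed
next
  case a: False
  show ?thesis
  proof (cases "b \<le> n")
    case True
    have "clif n a (clif n b \<beta>) T + clif n b (clif n a \<beta>) T
        = 2 * (ctr (a - n) (ext b \<beta>) T + ext b (ctr (a - n) \<beta>) T)"
      using a True by (simp add: clif_def linext algebra_simps)
    also have "\<dots> = (if b = pt n a then 2 * \<beta> T else 0)"
      using ctr_ext[of "a-n" b \<beta> T] a True assms by (auto simp: pt_def)
    finally show ?thesis .
  next
    case False
    have "clif n a (clif n b \<beta>) T + clif n b (clif n a \<beta>) T
        = 4 * (ctr (a - n) (ctr (b - n) \<beta>) T + ctr (b - n) (ctr (a - n) \<beta>) T)"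
      using a False by (simp add: clif_def linctr algebra_simps)
    also have "\<dots> = (if b = pt n a then 2 * \<beta> T else 0)"
      using ctr_ctr[of "a-n" "b-n" \<beta> T] a False assms by (auto simp: pt_def)
    finally show ?thesis .
  qed
qed

lemma clif_anti_fun: assumes "a \<in> {1..2*n}" "b \<in> {1..2*n}"
  shows "clif n a (clif n b \<beta>) = (\<lambda>T. (if b = pt n a then 2 * \<beta> T else 0) - clif n b (clif n a \<beta>) T)"
  using clif_anti[OF assms, of \<beta>] by (auto simp: fun_eq_iff algebra_simps)

lemma rhoS_alt: "rhoS n a b \<beta> = (\<lambda>T. (1/4) * (clif n a (clif n b \<beta>) T - clif n b (clif n a \<beta>) T))"
  by (simp add: rhoS_def)

lemma rhoS_clif: assumes "a \<in> {1..2*n}" "b \<in> {1..2*n}" "u \<in> {1..2*n}"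
  shows "rhoS n a b (clif n u \<beta>) T = clif n u (rhoS n a b \<beta>) T
   + (if u = pt n b then clif n a \<beta> T else 0) - (if u = pt n a then clif n b \<beta> T else 0)"
proof -
  have 1: "clif n a (clif n b (clif n u \<beta>)) T = 2 * (if u = pt n b then clif n a \<beta> T else 0)
     - 2 * (if u = pt n a then clif n b \<beta> T else 0) + clif n u (clif n a (clif n b \<beta>)) T"
  proof -
    have "clif n a (clif n b (clif n u \<beta>)) T = clif n a (\<lambda>T. (if u = pt n b then 2 * \<beta> T else 0) - clif n u (clif n b \<beta>) T) T"
      by (simp only: clif_anti_fun[OF assms(2,3)])
    also have "\<dots> = 2 * (if u = pt n b then clif n a \<beta> T else 0) - clif n a (clif n u (clif n b \<beta>)) T"
      by (simp add: linclif if_fun_clif)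
    also have "clif n a (clif n u (clif n b \<beta>)) T = (if u = pt n a then 2 * clif n b \<beta> T else 0) - clif n u (clif n a (clif n b \<beta>)) T"
      using clif_anti[OF assms(1,3), of "clif n b \<beta>" T] by (simp add: eq_diff_eq)
    finally show ?thesis by simp
  qed
  have 2: "clif n b (clif n a (clif n u \<beta>)) T = 2 * (if u = pt n a then clif n b \<beta> T else 0)
     - 2 * (if u = pt n b then clif n a \<beta> T else 0) + clif n u (clif n b (clif n a \<beta>)) T"
  proof -
    have "clif n b (clif n a (clif n u \<beta>)) T = clif n b (\<lambda>T. (if u = pt n a then 2 * \<beta> T else 0) - clif n u (clif n a \<beta>) T) T"
      by (simp only: clif_anti_fun[OF assms(1,3)])
    also have "\<dots> = 2 * (if u = pt n a then clif n b \<beta> T else 0) - clif n b (clif n u (clif n a \<beta>)) T"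
      by (simp add: linclif if_fun_clif)
    also have "clif n b (clif n u (clif n a \<beta>)) T = (if u = pt n b then 2 * clif n a \<beta> T else 0) - clif n u (clif n b (clif n a \<beta>)) T"
      using clif_anti[OF assms(2,3), of "clif n a \<beta>" T] by (simp add: eq_diff_eq)
    finally show ?thesis by simp
  qed
  show ?thesis unfolding rhoS_alt 1 2 by (simp add: linclif algebra_simps)
qed




definition LL :: "((nat set \<Rightarrow> complex) \<Rightarrow> (nat set \<Rightarrow> complex)) \<Rightarrow> (nat set \<times> nat set \<Rightarrow> complex) \<Rightarrow> (nat set \<times> nat set \<Rightarrow> complex)" where
  "LL A w = (\<lambda>(S,T). A (\<lambda>S'. w (S',T)) S)"
definition RR :: "((nat set \<Rightarrow> complex) \<Rightarrow> (nat set \<Rightarrow> complex)) \<Rightarrow> (nat set \<times> nat set \<Rightarrow> complex) \<Rightarrow> (nat set \<times> nat set \<Rightarrow> complex)" where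
  "RR B w = (\<lambda>(S,T). B (\<lambda>T'. w (S,T')) T)"

definition Eop :: "nat \<Rightarrow> (nat set \<times> nat set \<Rightarrow> complex) \<Rightarrow> (nat set \<times> nat set \<Rightarrow> complex)" where
  "Eop n w = (\<lambda>z. \<Sum>c\<in>{1..2*n}. LL (ext c) (RR (clif n (pt n c)) w) z)"

lemma LL_app: "LL A w (S,T) = A (\<lambda>S'. w (S',T)) S" by (simp add: LL_def)
lemma RR_app: "RR B w (S,T) = B (\<lambda>T'. w (S,T')) T" by (simp add: RR_def)

lemma act_LR: "act n a b w = (\<lambda>z. LL (rhoV n a b) w z + RR (rhoS n a b) w z)"
  by (auto simp: act_def LL_def RR_def fun_eq_iff)

lemma lin_LL: "lin A \<Longrightarrow> lin (LL A)"
  unfolding lin_def LL_def by (auto simp: fun_eq_iff)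
lemma lin_RR: "lin B \<Longrightarrow> lin (RR B)"
  unfolding lin_def RR_def by (auto simp: fun_eq_iff)

lemma lin_if: "lin A \<Longrightarrow> A (\<lambda>x. if P then f x else 0) = (\<lambda>x. if P then A f x else 0)"
  by (cases P) (auto simp: lin_zero)

definition st :: "((nat set \<Rightarrow> complex) \<Rightarrow> (nat set \<Rightarrow> complex)) \<Rightarrow> bool" where
  "st B \<longleftrightarrow> (\<exists>P s g. \<forall>f x. B f x = (if P x then s x * f (g x) else 0))"

lemma st_ext: "st (ext c)" unfolding st_def ext_def
  by (rule exI[of _ "\<lambda>x. c \<in> x"], rule exI[of _ "\<lambda>x. sgnb c (x - {c})"], rule exI[of _ "\<lambda>x. x - {c}"]) simp
lemma st_ctr: "st (ctr c)" unfolding st_def ctr_def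
  by (rule exI[of _ "\<lambda>x. c \<notin> x"], rule exI[of _ "\<lambda>x. sgnb c x"], rule exI[of _ "\<lambda>x. insert c x"]) simp
lemma st_clif: "st (clif n c)"
proof (cases "c \<le> n")
  case True
  then have "clif n c = ext c" by (auto simp: clif_def fun_eq_iff)
  then show ?thesis using st_ext by simp
next
  case False
  have "\<forall>f x. clif n c f x = (if c - n \<notin> x then 2 * sgnb (c - n) x * f (insert (c - n) x) else 0)"
    using False by (simp add: clif_def ctr_def)
  then show ?thesis unfolding st_def
    by (intro exI[of _ "\<lambda>x. c - n \<notin> x"] exI[of _ "\<lambda>x. 2 * sgnb (c - n) x"] exI[of _ "\<lambda>x. insert (c - n) x"]) simp
qed

lemma LR_comm1: assumes "st A" "lin B" shows "LL A (RR B w) = RR B (LL A w)"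
proof -
  obtain P s g where A: "\<And>f x. A f x = (if P x then s x * f (g x) else 0)" using assms(1) unfolding st_def by blast
  show ?thesis
    by (auto simp: fun_eq_iff LL_def RR_def A lin_scal[OF assms(2)] lin_zero[OF assms(2)] lin_if[OF assms(2)])
qed

lemma LR_comm2: assumes "lin A" "st B" shows "LL A (RR B w) = RR B (LL A w)"
proof -
  obtain P s g where B: "\<And>f x. B f x = (if P x then s x * f (g x) else 0)" using assms(2) unfolding st_def by blast
  show ?thesis
    by (auto simp: fun_eq_iff LL_def RR_def B lin_scal[OF assms(1)] lin_zero[OF assms(1)] lin_if[OF assms(1)])
qed

lemma LL_rhoV_ext: "LL (rhoV n a b) (LL (ext c) Y) = (\<lambda>z. LL (ext c) (LL (rhoV n a b) Y) z
   + (if c = pt n b then LL (ext a) Y z else 0) - (if c = pt n a then LL (ext b) Y z else 0))"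
  by (auto simp: fun_eq_iff LL_def rhoV_ext)

lemma RR_rhoS_clif: assumes "a \<in> {1..2*n}" "b \<in> {1..2*n}" "u \<in> {1..2*n}"
  shows "RR (rhoS n a b) (RR (clif n u) Y) = (\<lambda>z. RR (clif n u) (RR (rhoS n a b) Y) z
   + (if u = pt n b then RR (clif n a) Y z else 0) - (if u = pt n a then RR (clif n b) Y z else 0))"
  by (auto simp: fun_eq_iff RR_def rhoS_clif[OF assms])




lemma sum_if_eq: "x \<in> A \<Longrightarrow> finite A \<Longrightarrow> (\<Sum>c\<in>A. if c = x then f c else 0) = f x"
  by (simp add: sum.delta')

lemma E_equiv: assumes ab: "a \<in> {1..2*n}" "b \<in> {1..2*n}"
  shows "Eop n (act n a b w) = act n a b (Eop n w)"
proof
  fix z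
  let ?lV = "LL (rhoV n a b)" and ?rS = "RR (rhoS n a b)"
  have linlV: "lin ?lV" by (rule lin_LL[OF lin_rhoV])
  have linrS: "lin ?rS" by (rule lin_RR[OF lin_rhoS])
  have linLc: "\<And>c. lin (LL (ext c))" by (rule lin_LL[OF lin_ext])
  have linRc: "\<And>c. lin (RR (clif n c))" by (rule lin_RR[OF lin_clif])
  define extra where "extra = (\<lambda>c. (if c = pt n b then LL (ext a) (RR (clif n (pt n c)) w) z else 0)
       - (if c = pt n a then LL (ext b) (RR (clif n (pt n c)) w) z else 0)
       + (if pt n c = pt n b then LL (ext c) (RR (clif n a) w) z else 0)
       - (if pt n c = pt n a then LL (ext c) (RR (clif n b) w) z else 0))"
  have hterm: "?lV (LL (ext c) (RR (clif n (pt n c)) w)) z + ?rS (LL (ext c) (RR (clif n (pt n c)) w)) z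
      = LL (ext c) (RR (clif n (pt n c)) (act n a b w)) z + extra c" if c: "c \<in> {1..2*n}" for c
  proof -
    have pc: "pt n c \<in> {1..2*n}" by (rule pt_range[OF c])
    have 1: "?lV (LL (ext c) (RR (clif n (pt n c)) w)) z = LL (ext c) (RR (clif n (pt n c)) (?lV w)) z
       + (if c = pt n b then LL (ext a) (RR (clif n (pt n c)) w) z else 0)
       - (if c = pt n a then LL (ext b) (RR (clif n (pt n c)) w) z else 0)"
      by (simp add: LL_rhoV_ext LR_comm2[OF lin_rhoV st_clif])
    have 2: "?rS (LL (ext c) (RR (clif n (pt n c)) w)) z = LL (ext c) (RR (clif n (pt n c)) (?rS w)) z
       + (if pt n c = pt n b then LL (ext c) (RR (clif n a) w) z else 0)
       - (if pt n c = pt n a then LL (ext c) (RR (clif n b) w) z else 0)"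
      by (simp add: LR_comm1[OF st_ext lin_rhoS, symmetric] RR_rhoS_clif[OF ab pc]
          lin_add[OF linLc] lin_diff[OF linLc] lin_if[OF linLc])
    have 3: "LL (ext c) (RR (clif n (pt n c)) (act n a b w)) z
        = LL (ext c) (RR (clif n (pt n c)) (?lV w)) z + LL (ext c) (RR (clif n (pt n c)) (?rS w)) z"
      by (simp add: act_LR lin_add[OF linLc] lin_add[OF linRc])
    show ?thesis using 1 2 3 unfolding extra_def by simp
  qed
  have extra0: "(\<Sum>c\<in>{1..2*n}. extra c) = 0"
  proof -
    have e: "(\<Sum>c\<in>{1..2*n}. extra c) =
        (\<Sum>c\<in>{1..2*n}. if c = pt n b then LL (ext a) (RR (clif n (pt n c)) w) z else 0)
      - (\<Sum>c\<in>{1..2*n}. if c = pt n a then LL (ext b) (RR (clif n (pt n c)) w) z else 0)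
      + (\<Sum>c\<in>{1..2*n}. if c = b then LL (ext c) (RR (clif n a) w) z else 0)
      - (\<Sum>c\<in>{1..2*n}. if c = a then LL (ext c) (RR (clif n b) w) z else 0)"
      unfolding extra_def sum.distrib sum_subtractf
      by (intro arg_cong2[where f="(-)"] arg_cong2[where f="(+)"] sum.cong refl) (use ab in \<open>auto simp: pt_def split: if_splits\<close>)
    have r: "pt n a \<in> {1..2*n}" "pt n b \<in> {1..2*n}" using pt_range ab by auto
    show ?thesis unfolding e
      by (simp only: sum_if_eq[OF r(1)] sum_if_eq[OF r(2)] sum_if_eq[OF ab(1)] sum_if_eq[OF ab(2)] finite_atLeastAtMost pt_pt[OF ab(1)] pt_pt[OF ab(2)]) simp
  qed
  have "act n a b (Eop n w) z = ?lV (Eop n w) z + ?rS (Eop n w) z" by (simp add: act_LR)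
  also have "\<dots> = (\<Sum>c\<in>{1..2*n}. ?lV (LL (ext c) (RR (clif n (pt n c)) w)) z + ?rS (LL (ext c) (RR (clif n (pt n c)) w)) z)"
    unfolding Eop_def lin_sum[OF linlV] lin_sum[OF linrS] sum.distrib by simp
  also have "\<dots> = (\<Sum>c\<in>{1..2*n}. LL (ext c) (RR (clif n (pt n c)) (act n a b w)) z + extra c)"
    by (rule sum.cong) (auto simp: hterm)
  also have "\<dots> = Eop n (act n a b w) z" unfolding sum.distrib extra0 Eop_def by simp
  finally show "Eop n (act n a b w) z = act n a b (Eop n w) z" by simp
qed




definition Wg :: "nat \<Rightarrow> nat \<Rightarrow> bool \<Rightarrow> (nat set \<times> nat set \<Rightarrow> complex) set" where
  "Wg n k par = {w. \<forall>S T. w (S,T) \<noteq> 0 \<longrightarrow> S \<subseteq> {1..2*n} \<and> card S = k \<and> T \<subseteq> {1..n} \<and> odd (card T) = par}"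

lemma Wmod_Wg: "Wmod n k = Wg n k True" by (simp add: Wmod_def Wg_def)

definition supp :: "('x \<Rightarrow> complex) \<Rightarrow> ('x \<Rightarrow> bool) \<Rightarrow> bool" where
  "supp f G \<longleftrightarrow> (\<forall>x. f x \<noteq> 0 \<longrightarrow> G x)"

definition GV where "GV n k S \<longleftrightarrow> S \<subseteq> {1..2*n} \<and> card S = k"
definition GT where "GT n par T \<longleftrightarrow> T \<subseteq> {1..n} \<and> odd (card T) = par"

lemma supp_ext: assumes "c \<in> {1..2*n}" "supp \<alpha> (\<lambda>S. S \<subseteq> {1..2*n} \<and> Suc (card S) = k)"
  shows "supp (ext c \<alpha>) (GV n k)"
  unfolding supp_def GV_def
proof (intro allI impI)
  fix S assume "ext c \<alpha> S \<noteq> 0"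
  then have c: "c \<in> S" and a: "\<alpha> (S - {c}) \<noteq> 0" by (auto simp: ext_def split: if_splits)
  have s: "S - {c} \<subseteq> {1..2*n}" "Suc (card (S - {c})) = k" using assms(2) a unfolding supp_def by auto
  have "finite (S - {c})" using s(1) by (rule finite_subset) simp
  then have f: "finite S" by simp
  have "Suc (card (S - {c})) = card S" using f c by (rule card_Suc_Diff1)
  then show "S \<subseteq> {1..2*n} \<and> card S = k" using s c assms(1) f by auto
qed

lemma supp_ctr: assumes "supp \<alpha> (GV n k)"
  shows "supp (ctr c \<alpha>) (\<lambda>S. S \<subseteq> {1..2*n} \<and> Suc (card S) = k)"
  unfolding supp_def
proof (intro allI impI)
  fix S assume "ctr c \<alpha> S \<noteq> 0"
  then have c: "c \<notin> S" and a: "\<alpha> (insert c S) \<noteq> 0" by (auto simp: ctr_def split: if_splits)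
  have s: "insert c S \<subseteq> {1..2*n}" "card (insert c S) = k" using assms a unfolding supp_def GV_def by auto
  have f: "finite S" using s(1) by (meson finite_atLeastAtMost finite_insert finite_subset)
  show "S \<subseteq> {1..2*n} \<and> Suc (card S) = k" using s c f by auto
qed

lemma supp_diff: "supp f G \<Longrightarrow> supp g G \<Longrightarrow> supp (\<lambda>x. f x - g x) G"
  unfolding supp_def apply (intro allI impI) subgoal for x by (cases "f x = 0") auto done
lemma supp_scal: "supp f G \<Longrightarrow> supp (\<lambda>x. c * f x) G"
  unfolding supp_def by auto

lemma supp_rhoV: assumes "a \<in> {1..2*n}" "b \<in> {1..2*n}" "supp \<alpha> (GV n k)"
  shows "supp (rhoV n a b \<alpha>) (GV n k)"
  unfolding rhoV_def
  by (intro supp_diff supp_ext supp_ctr assms)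

lemma supp_clif: assumes "c \<in> {1..2*n}" "supp \<beta> (GT n par)"
  shows "supp (clif n c \<beta>) (GT n (\<not> par))"
  unfolding supp_def
proof (intro allI impI)
  fix T assume nz: "clif n c \<beta> T \<noteq> 0"
  show "GT n (\<not> par) T"
  proof (cases "c \<le> n")
    case True
    then have c: "c \<in> T" and a: "\<beta> (T - {c}) \<noteq> 0" using nz by (auto simp: clif_def ext_def split: if_splits)
    have s: "T - {c} \<subseteq> {1..n}" "odd (card (T - {c})) = par" using assms(2) a unfolding supp_def GT_def by auto
    have "finite (T - {c})" using s(1) by (rule finite_subset) simp
    then have f: "finite T" by simp
    have "card T = Suc (card (T - {c}))" using card_Suc_Diff1[OF f c] by simp
    then show ?thesis using s c assms(1) True unfolding GT_def by auto
  next
    case False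
    then have c: "c - n \<notin> T" and a: "\<beta> (insert (c - n) T) \<noteq> 0" using nz by (auto simp: clif_def ctr_def split: if_splits)
    have s: "insert (c - n) T \<subseteq> {1..n}" "odd (card (insert (c-n) T)) = par" using assms(2) a unfolding supp_def GT_def by auto
    have f: "finite T" using s(1) by (meson finite_atLeastAtMost finite_insert finite_subset)
    show ?thesis using s c f unfolding GT_def by auto
  qed
qed

lemma supp_rhoS: assumes "a \<in> {1..2*n}" "b \<in> {1..2*n}" "supp \<beta> (GT n par)"
  shows "supp (rhoS n a b \<beta>) (GT n par)"
proof -
  have "supp (clif n a (clif n b \<beta>)) (GT n par)" using supp_clif[OF assms(1) supp_clif[OF assms(2,3)]] by simp
  moreover have "supp (clif n b (clif n a \<beta>)) (GT n par)" using supp_clif[OF assms(2) supp_clif[OF assms(1,3)]] by simp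
  ultimately show ?thesis unfolding rhoS_alt by (intro supp_scal supp_diff)
qed

lemma Wg_row: "w \<in> Wg n k par \<Longrightarrow> supp (\<lambda>S'. w (S',T)) (GV n k)"
  unfolding Wg_def supp_def GV_def by auto
lemma Wg_col: "w \<in> Wg n k par \<Longrightarrow> supp (\<lambda>T'. w (S,T')) (GT n par)"
  unfolding Wg_def supp_def GT_def by auto
lemma Wg_row0: assumes "w \<in> Wg n k par" "\<not> GT n par T" shows "(\<lambda>S'. w (S',T)) = (\<lambda>S'. 0)"
proof (rule ext, rule ccontr)
  fix S' assume "w (S',T) \<noteq> 0"
  then have "GT n par T" using assms(1) unfolding Wg_def GT_def by blast
  then show False using assms(2) by blast
qed
lemma Wg_col0: assumes "w \<in> Wg n k par" "\<not> GV n k S" shows "(\<lambda>T'. w (S,T')) = (\<lambda>T'. 0)"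
proof (rule ext, rule ccontr)
  fix T' assume "w (S,T') \<noteq> 0"
  then have "GV n k S" using assms(1) unfolding Wg_def GV_def by blast
  then show False using assms(2) by blast
qed

lemma act_Wg: assumes "a \<in> {1..2*n}" "b \<in> {1..2*n}" "w \<in> Wg n k par"
  shows "act n a b w \<in> Wg n k par"
  unfolding Wg_def
proof (intro CollectI allI impI)
  fix S T assume nz: "act n a b w (S,T) \<noteq> 0"
  have "GV n k S \<and> GT n par T"
  proof (cases "rhoV n a b (\<lambda>S'. w (S',T)) S = 0")
    case True
    then have nz2: "rhoS n a b (\<lambda>T'. w (S,T')) T \<noteq> 0" using nz by (simp add: act_def)
    have g: "GV n k S"
    proof (rule ccontr)
      assume "\<not> GV n k S"
      then show False using nz2 Wg_col0[OF assms(3)] lin_zero[OF lin_rhoS] by metis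
    qed
    then show ?thesis using nz2 supp_rhoS[OF assms(1,2) Wg_col[OF assms(3)]] unfolding supp_def by auto
  next
    case False
    have g: "GT n par T"
    proof (rule ccontr)
      assume "\<not> GT n par T"
      then show False using False Wg_row0[OF assms(3)] lin_zero[OF lin_rhoV] by metis
    qed
    then show ?thesis using False supp_rhoV[OF assms(1,2) Wg_row[OF assms(3)]] unfolding supp_def by auto
  qed
  then show "S \<subseteq> {1..2*n} \<and> card S = k \<and> T \<subseteq> {1..n} \<and> odd (card T) = par"
    unfolding GV_def GT_def by auto
qed

lemma Eop_Wg: assumes "x \<in> Wg n k' False" "Suc k' = k"
  shows "Eop n x \<in> Wg n k True"
  unfolding Wg_def
proof (intro CollectI allI impI)
  fix S T assume nz: "Eop n x (S,T) \<noteq> 0"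
  then obtain c where c: "c \<in> {1..2*n}" and nzc: "LL (ext c) (RR (clif n (pt n c)) x) (S,T) \<noteq> 0"
    unfolding Eop_def by (meson sum.neutral)
  define g where "g = (\<lambda>S'. clif n (pt n c) (\<lambda>T'. x (S',T')) T)"
  have nzg: "ext c g S \<noteq> 0" using nzc by (simp add: LL_app RR_app g_def)
  have pc: "pt n c \<in> {1..2*n}" using pt_range[OF c] .
  have sg: "supp g (\<lambda>S. S \<subseteq> {1..2*n} \<and> Suc (card S) = k)"
    unfolding supp_def
  proof (intro allI impI)
    fix S' assume "g S' \<noteq> 0"
    then have "GV n k' S'" using Wg_col0[OF assms(1), of S'] lin_zero[OF lin_clif] unfolding g_def by metis
    then show "S' \<subseteq> {1..2*n} \<and> Suc (card S') = k" using assms(2) unfolding GV_def by auto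
  qed
  have gT: "GT n True T"
  proof -
    obtain S' where "g S' \<noteq> 0" using nzg by (auto simp: ext_def split: if_splits)
    then show ?thesis using supp_clif[OF pc Wg_col[OF assms(1)], of S'] unfolding g_def supp_def by auto
  qed
  have "GV n k S" using supp_ext[OF c sg] nzg unfolding supp_def by auto
  then show "S \<subseteq> {1..2*n} \<and> card S = k \<and> T \<subseteq> {1..n} \<and> odd (card T) = True"
    using gT unfolding GV_def GT_def by auto
qed




lemma lin_Eop: "lin (Eop n)"
proof -
  have l: "\<And>c. lin (\<lambda>w. LL (ext c) (RR (clif n (pt n c)) w))"
    by (rule lin_comp[OF lin_LL[OF lin_ext] lin_RR[OF lin_clif]])
  show ?thesis unfolding lin_def Eop_def
  proof (intro allI)
    fix f g :: "nat set \<times> nat set \<Rightarrow> complex" and a b :: complex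
    have "\<And>c. LL (ext c) (RR (clif n (pt n c)) (\<lambda>x. a * f x + b * g x))
       = (\<lambda>x. a * LL (ext c) (RR (clif n (pt n c)) f) x + b * LL (ext c) (RR (clif n (pt n c)) g) x)"
      using l unfolding lin_def by blast
    then show "(\<lambda>z. \<Sum>c\<in>{1..2*n}. LL (ext c) (RR (clif n (pt n c)) (\<lambda>x. a * f x + b * g x)) z) =
      (\<lambda>x. a * (\<Sum>c\<in>{1..2*n}. LL (ext c) (RR (clif n (pt n c)) f) x) + b * (\<Sum>c\<in>{1..2*n}. LL (ext c) (RR (clif n (pt n c)) g) x))"
      by (simp add: sum.distrib sum_distrib_left)
  qed
qed

lemma wedge_Cons: "wedge_list (x # xs) = ext x (wedge_list xs)"
  by (simp add: wedge_list_def)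

lemma foldr_ext: "foldr ext xs (ext y \<alpha>) = (\<lambda>S. (-1)^length xs * ext y (foldr ext xs \<alpha>) S)"
proof (induction xs)
  case Nil then show ?case by simp
next
  case (Cons x xs)
  have "foldr ext (x # xs) (ext y \<alpha>) = ext x (\<lambda>S. (-1)^length xs * ext y (foldr ext xs \<alpha>) S)"
    using Cons by simp
  also have "\<dots> = (\<lambda>S. (-1)^length xs * ext x (ext y (foldr ext xs \<alpha>)) S)" by (simp add: linext)
  also have "\<dots> = (\<lambda>S. (-1)^length (x # xs) * ext y (foldr ext (x # xs) \<alpha>) S)"
    by (simp add: ext_ext[of x y])
  finally show ?case .
qed

lemma wedge_snoc: "wedge_list (xs @ [y]) = (\<lambda>S. (-1)^length xs * ext y (wedge_list xs) S)"
  unfolding wedge_list_def by (simp add: foldr_ext)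

lemma wedge_supp: "wedge_list xs S \<noteq> 0 \<Longrightarrow> S = set xs \<and> distinct xs"
proof (induction xs arbitrary: S)
  case Nil then show ?case by (simp add: wedge_list_def split: if_splits)
next
  case (Cons x xs)
  then have x: "x \<in> S" and nz: "wedge_list xs (S - {x}) \<noteq> 0"
    by (auto simp: wedge_Cons ext_def split: if_splits)
  from Cons.IH[OF nz] have "S - {x} = set xs" "distinct xs" by auto
  then show ?case using x by auto
qed

definition Lst :: "nat \<Rightarrow> nat set \<Rightarrow> nat list" where
  "Lst n I = sorted_list_of_set I @ map (\<lambda>x. x + n) (sorted_list_of_set I)"

definition omg :: "nat \<Rightarrow> nat \<Rightarrow> nat \<Rightarrow> nat set \<Rightarrow> complex" where
  "omg n m i = (\<lambda>S. \<Sum>I\<in>{I. I \<subseteq> {1..n} \<and> card I = m - i - 1}. wedge_list (Lst n I) S)"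

definition phi :: "nat \<Rightarrow> nat \<Rightarrow> nat \<Rightarrow> nat set \<times> nat set \<Rightarrow> complex" where
  "phi n m i = (\<lambda>(S,T). omg n m i S * (if T = {} then 1 else 0))"

lemma phi_Wg: "phi n m i \<in> Wg n (2 * (m - i - 1)) False"
  unfolding Wg_def
proof (intro CollectI allI impI)
  fix S T assume nz: "phi n m i (S,T) \<noteq> 0"
  then have T: "T = {}" and o: "omg n m i S \<noteq> 0" by (auto simp: phi_def split: if_splits)
  from o obtain I where I: "I \<in> {I. I \<subseteq> {1..n} \<and> card I = m - i - 1}" and w: "wedge_list (Lst n I) S \<noteq> 0"
    unfolding omg_def using sum.not_neutral_contains_not_neutral by blast
  from wedge_supp[OF w] have S: "S = set (Lst n I)" "distinct (Lst n I)" by auto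
  have I1: "I \<subseteq> {1..n}" and I2: "card I = m - i - 1" using I by auto
  have fI: "finite I" using I1 finite_subset by blast
  have "card S = length (Lst n I)" using S distinct_card by metis
  also have "\<dots> = 2 * card I" by (simp add: Lst_def)
  finally have c: "card S = 2 * (m - i - 1)" using I2 by simp
  have "set (Lst n I) = I \<union> (\<lambda>x. x + n) ` I" using fI by (simp add: Lst_def)
  then have "S \<subseteq> {1..2*n}" using S(1) I1 by auto
  then show "S \<subseteq> {1..2*n} \<and> card S = 2 * (m - i - 1) \<and> T \<subseteq> {1..n} \<and> odd (card T) = False"
    using c T by simp
qed

lemma clif_delta: assumes "c \<in> {1..2*n}"
  shows "clif n (pt n c) (\<lambda>T'. a * (if T' = {} then 1 else 0)) T = (if n < c \<and> T = {c - n} then a else 0)"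
proof (cases "c \<le> n")
  case True
  then show ?thesis using assms by (auto simp: clif_def pt_def ctr_def)
next
  case False
  then have p: "pt n c = c - n" "c - n \<le> n" "c - n \<ge> 1" using assms by (auto simp: pt_def)
  show ?thesis
  proof (cases "T = {c - n}")
    case True then show ?thesis using p False by (simp add: clif_def ext_def sgnb_def)
  next
    case F2: False
    have "c - n \<in> T \<Longrightarrow> T - {c - n} \<noteq> {}" using F2 by auto
    then show ?thesis using p False F2 by (auto simp: clif_def ext_def)
  qed
qed

lemma Eop_phi: "Eop n (phi n m i) (S,T) = (\<Sum>c\<in>{1..2*n}. if n < c \<and> T = {c - n} then ext c (omg n m i) S else 0)"
proof -
  have "Eop n (phi n m i) (S,T) = (\<Sum>c\<in>{1..2*n}. ext c (\<lambda>S'. clif n (pt n c) (\<lambda>T'. omg n m i S' * (if T' = {} then 1 else 0)) T) S)"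
    unfolding Eop_def by (simp add: LL_app RR_app phi_def)
  also have "\<dots> = (\<Sum>c\<in>{1..2*n}. ext c (\<lambda>S'. if n < c \<and> T = {c - n} then omg n m i S' else 0) S)"
    by (rule sum.cong) (simp_all add: clif_delta)
  also have "\<dots> = (\<Sum>c\<in>{1..2*n}. if n < c \<and> T = {c - n} then ext c (omg n m i) S else 0)"
    by (rule sum.cong) (simp_all add: if_fun_ext[of _ _ "omg n m i", simplified])
  finally show ?thesis .
qed




lemma reidx: fixes n :: nat shows "(\<Sum>c\<in>{1..2*n}. if n < c \<and> T = {c - n} then g c else 0)
   = (\<Sum>j\<in>{1..n}. if T = {j} then g (n + j) else (0::complex))"
proof -
  have im: "(\<lambda>j. n + j) ` {1..n} = {n+1..2*n}"
  proof
    show "(\<lambda>j. n + j) ` {1..n} \<subseteq> {n+1..2*n}" by auto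
    show "{n+1..2*n} \<subseteq> (\<lambda>j. n + j) ` {1..n}"
    proof
      fix c assume "c \<in> {n+1..2*n}"
      then have "c = n + (c - n)" "c - n \<in> {1..n}" by auto
      then show "c \<in> (\<lambda>j. n + j) ` {1..n}" by blast
    qed
  qed
  have "(\<Sum>j\<in>{1..n}. if T = {j} then g (n + j) else (0::complex))
      = (\<Sum>j\<in>{1..n}. (\<lambda>c. if n < c \<and> T = {c - n} then g c else 0) (n + j))"
    by (rule sum.cong) auto
  also have "\<dots> = (\<Sum>c\<in>(\<lambda>j. n + j) ` {1..n}. if n < c \<and> T = {c - n} then g c else 0)"
    by (rule sum.reindex[symmetric, unfolded comp_def]) (simp add: inj_on_def)
  also have "\<dots> = (\<Sum>c\<in>{n+1..2*n}. if n < c \<and> T = {c - n} then g c else 0)" by (simp only: im)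
  also have "\<dots> = (\<Sum>c\<in>{1..2*n}. if n < c \<and> T = {c - n} then g c else 0)"
    by (rule sum.mono_neutral_left) auto
  finally show ?thesis by simp
qed

lemma psi_eq: "psi n m i = Eop n (phi n m i)"
proof (rule ext, clarify)
  fix S T
  have w: "wedge_list (sorted_list_of_set I @ map (\<lambda>x. x + n) (sorted_list_of_set I) @ [n + j]) S
      = ext (n + j) (wedge_list (Lst n I)) S" for I j
    unfolding append_assoc[symmetric] Lst_def[symmetric] wedge_snoc by (simp add: Lst_def)
  have "psi n m i (S,T) = (\<Sum>I\<in>{I. I \<subseteq> {1..n} \<and> card I = m - i - 1}. \<Sum>j\<in>{1..n}.
      ext (n + j) (wedge_list (Lst n I)) S * (if T = {j} then 1 else 0))"
    unfolding psi_def by (simp add: w)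
  also have "\<dots> = (\<Sum>j\<in>{1..n}. \<Sum>I\<in>{I. I \<subseteq> {1..n} \<and> card I = m - i - 1}.
      ext (n + j) (wedge_list (Lst n I)) S * (if T = {j} then 1 else 0))"
    by (rule sum.swap)
  also have "\<dots> = (\<Sum>j\<in>{1..n}. if T = {j} then ext (n + j) (omg n m i) S else 0)"
    unfolding omg_def linext sum_distrib_right[symmetric] by (intro sum.cong refl) simp
  also have "\<dots> = Eop n (phi n m i) (S,T)" unfolding Eop_phi reidx ..
  finally show "psi n m i (S,T) = Eop n (phi n m i) (S,T)" .
qed




definition hr :: "nat \<Rightarrow> nat \<Rightarrow> nat set \<Rightarrow> nat set \<Rightarrow> real" where
  "hr n j S T = (if j \<in> S then 1 else 0) - (if n + j \<in> S then 1 else 0) + (if j \<in> T then 1/2 else -1/2)"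

lemma ext_ctr_same: "ext c (ctr c \<alpha>) S = (if c \<in> S then \<alpha> S else 0)"
  by (auto simp: ext_def ctr_def insert_absorb)
lemma ctr_ext_same: "ctr c (ext c \<alpha>) S = (if c \<notin> S then \<alpha> S else 0)"
  by (auto simp: ext_def ctr_def)

lemma H_diag: assumes "j \<in> {1..n}"
  shows "act n j (n + j) w (S,T) = complex_of_real (hr n j S T) * w (S,T)"
proof -
  have p: "pt n (n + j) = j" "pt n j = n + j" using assms by (auto simp: pt_def)
  have c: "clif n j = ext j" "clif n (n + j) = (\<lambda>\<beta> T. 2 * ctr j \<beta> T)" using assms by (auto simp: clif_def fun_eq_iff)
  show ?thesis
    unfolding act_def rhoV_def rhoS_def p c
    by (simp add: linext ext_ctr_same ctr_ext_same hr_def)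
qed

definition Hsum :: "nat \<Rightarrow> nat \<Rightarrow> (nat set \<times> nat set \<Rightarrow> complex) \<Rightarrow> (nat set \<times> nat set \<Rightarrow> complex)" where
  "Hsum n k w = (\<lambda>z. \<Sum>j\<in>{1..k}. act n j (n + j) w z)"

definition hs :: "nat \<Rightarrow> nat \<Rightarrow> nat set \<Rightarrow> nat set \<Rightarrow> real" where
  "hs n k S T = (\<Sum>j\<in>{1..k}. hr n j S T)"

lemma Hsum_diag: assumes "k \<le> n" shows "Hsum n k w (S,T) = complex_of_real (hs n k S T) * w (S,T)"
  unfolding Hsum_def hs_def using assms
  by (simp add: H_diag sum_distrib_right)

fun Qs :: "nat \<Rightarrow> nat \<Rightarrow> complex list \<Rightarrow> (nat set \<times> nat set \<Rightarrow> complex) \<Rightarrow> (nat set \<times> nat set \<Rightarrow> complex)" where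
  "Qs n k [] w = w"
| "Qs n k (c # cs) w = (\<lambda>z. Hsum n k (Qs n k cs w) z - c * Qs n k cs w z)"

lemma Qs_diag: assumes "k \<le> n"
  shows "Qs n k cs w (S,T) = (\<Prod>c\<leftarrow>cs. complex_of_real (hs n k S T) - c) * w (S,T)"
  by (induction cs) (simp_all add: Hsum_diag[OF assms] algebra_simps)

lemma Eop_Hsum: assumes "k \<le> n" shows "Eop n (Hsum n k w) = Hsum n k (Eop n w)"
proof -
  have "Eop n (Hsum n k w) = (\<lambda>z. \<Sum>j\<in>{1..k}. Eop n (act n j (n + j) w) z)"
    unfolding Hsum_def by (rule lin_sum[OF lin_Eop])
  also have "\<dots> = Hsum n k (Eop n w)"
    unfolding Hsum_def using assms by (intro ext sum.cong refl) (simp add: E_equiv)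
  finally show ?thesis .
qed

lemma Qs_Eop: assumes "k \<le> n" shows "Eop n (Qs n k cs x) = Qs n k cs (Eop n x)"
proof (induction cs)
  case Nil then show ?case by simp
next
  case (Cons c cs)
  have "Eop n (Qs n k (c # cs) x) = (\<lambda>z. Eop n (Hsum n k (Qs n k cs x)) z - c * Eop n (Qs n k cs x) z)"
    by (simp add: lin_diff[OF lin_Eop] lin_scal[OF lin_Eop])
  then show ?case using Cons by (simp add: Eop_Hsum[OF assms])
qed

lemma Wg_mult: assumes "w \<in> Wg n k par" "\<And>z. w' z = f z * w z" shows "w' \<in> Wg n k par"
  unfolding Wg_def
proof (intro CollectI allI impI)
  fix S T assume "w' (S,T) \<noteq> 0"
  then have "w (S,T) \<noteq> 0" using assms(2) by auto
  then show "S \<subseteq> {1..2*n} \<and> card S = k \<and> T \<subseteq> {1..n} \<and> odd (card T) = par"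
    using assms(1) unfolding Wg_def by blast
qed
lemma Wg_add: assumes "x \<in> Wg n k par" "y \<in> Wg n k par" shows "(\<lambda>z. x z + y z) \<in> Wg n k par"
  unfolding Wg_def
proof (intro CollectI allI impI)
  fix S T assume "x (S,T) + y (S,T) \<noteq> 0"
  then have "x (S,T) \<noteq> 0 \<or> y (S,T) \<noteq> 0" by auto
  then show "S \<subseteq> {1..2*n} \<and> card S = k \<and> T \<subseteq> {1..n} \<and> odd (card T) = par"
    using assms unfolding Wg_def by blast
qed
lemma Wg_zero: "(\<lambda>z. 0) \<in> Wg n k par" unfolding Wg_def by auto

lemma Qs_Wg: "k \<le> n \<Longrightarrow> w \<in> Wg n K par \<Longrightarrow> Qs n k cs w \<in> Wg n K par"
  by (rule Wg_mult[where f="\<lambda>(S,T). \<Prod>c\<leftarrow>cs. complex_of_real (hs n k S T) - c"]) (auto simp: Qs_diag)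

context
  fixes n K C p
  assumes ep: "equiv_proj n K C p"
begin

lemma p_add: "x \<in> Wmod n K \<Longrightarrow> y \<in> Wmod n K \<Longrightarrow> p (\<lambda>z. x z + y z) = (\<lambda>z. p x z + p y z)"
  using ep unfolding equiv_proj_def by blast
lemma p_scal: "x \<in> Wmod n K \<Longrightarrow> p (\<lambda>z. c * x z) = (\<lambda>z. c * p x z)"
  using ep unfolding equiv_proj_def by blast
lemma p_zero: "p (\<lambda>z. 0) = (\<lambda>z. 0)"
  using p_scal[of "\<lambda>z. 0" 0] Wg_zero[of n K True] by (simp add: Wmod_Wg)
lemma p_C: "x \<in> Wmod n K \<Longrightarrow> p x \<in> C"
  using ep unfolding equiv_proj_def by blast
lemma p_act: "a \<in> {1..2*n} \<Longrightarrow> b \<in> {1..2*n} \<Longrightarrow> x \<in> Wmod n K \<Longrightarrow> p (act n a b x) = act n a b (p x)"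
  using ep unfolding equiv_proj_def by blast

lemma p_sum: "finite J \<Longrightarrow> (\<And>j. j \<in> J \<Longrightarrow> f j \<in> Wmod n K) \<Longrightarrow>
   p (\<lambda>z. \<Sum>j\<in>J. f j z) = (\<lambda>z. \<Sum>j\<in>J. p (f j) z) \<and> (\<lambda>z. \<Sum>j\<in>J. f j z) \<in> Wmod n K"
proof (induction J rule: finite_induct)
  case empty then show ?case by (simp add: p_zero Wg_zero Wmod_Wg)
next
  case (insert j J)
  then have h: "p (\<lambda>z. \<Sum>j\<in>J. f j z) = (\<lambda>z. \<Sum>j\<in>J. p (f j) z)" "(\<lambda>z. \<Sum>j\<in>J. f j z) \<in> Wmod n K" "f j \<in> Wmod n K"
    by auto
  have "p (\<lambda>z. f j z + (\<Sum>j\<in>J. f j z)) = (\<lambda>z. p (f j) z + p (\<lambda>z. \<Sum>j\<in>J. f j z) z)"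
    by (rule p_add[OF h(3) h(2)])
  then show ?case using insert h by (simp add: Wg_add Wmod_Wg)
qed

lemma Hsum_Wmod: "k \<le> n \<Longrightarrow> y \<in> Wmod n K \<Longrightarrow> Hsum n k y \<in> Wmod n K"
  unfolding Wmod_Wg by (rule Wg_mult[where f="\<lambda>(S,T). complex_of_real (hs n k S T)"]) (auto simp: Hsum_diag)

lemma p_Hsum: assumes "k \<le> n" "y \<in> Wmod n K" shows "p (Hsum n k y) = Hsum n k (p y)"
proof -
  have a: "\<And>j. j \<in> {1..k} \<Longrightarrow> act n j (n + j) y \<in> Wmod n K"
    using assms unfolding Wmod_Wg by (intro act_Wg) auto
  have "p (Hsum n k y) = (\<lambda>z. \<Sum>j\<in>{1..k}. p (act n j (n + j) y) z)"
    unfolding Hsum_def using p_sum[of "{1..k}" "\<lambda>j. act n j (n + j) y"] a by blast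
  also have "\<dots> = Hsum n k (p y)" unfolding Hsum_def using assms
    by (intro ext sum.cong refl) (simp add: p_act)
  finally show ?thesis .
qed

lemma p_Qs: assumes "k \<le> n" "y \<in> Wmod n K" shows "p (Qs n k cs y) = Qs n k cs (p y)"
proof (induction cs)
  case Nil then show ?case by simp
next
  case (Cons c cs)
  have q: "Qs n k cs y \<in> Wmod n K" using Qs_Wg assms unfolding Wmod_Wg by blast
  have hq: "Hsum n k (Qs n k cs y) \<in> Wmod n K" by (rule Hsum_Wmod[OF assms(1) q])
  have s: "(\<lambda>z. - c * Qs n k cs y z) \<in> Wmod n K" using q unfolding Wmod_Wg by (rule Wg_mult[where f="\<lambda>z. - c"]) simp
  have "p (Qs n k (c # cs) y) = p (\<lambda>z. Hsum n k (Qs n k cs y) z + (\<lambda>z. - c * Qs n k cs y z) z)"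
    by simp
  also have "\<dots> = (\<lambda>z. p (Hsum n k (Qs n k cs y)) z + p (\<lambda>z. - c * Qs n k cs y z) z)"
    by (rule p_add[OF hq s])
  also have "\<dots> = Qs n k (c # cs) (p y)"
  proof -
    have ps: "p (\<lambda>z. - (c * Qs n k cs y z)) = (\<lambda>z. - (c * p (Qs n k cs y) z))"
      using p_scal[OF q, of "-c"] by simp
    show ?thesis using Cons by (simp add: ps p_Hsum[OF assms(1) q])
  qed
  finally show ?case .
qed

end




lemma act_scal: "act n a b (\<lambda>z. c * w z) = (\<lambda>z. c * act n a b w z)"
  unfolding act_LR by (simp add: lin_scal[OF lin_LL[OF lin_rhoV]] lin_scal[OF lin_RR[OF lin_rhoS]] algebra_simps)

lemma Hsum_scal: "Hsum n K (\<lambda>z. c * w z) = (\<lambda>z. c * Hsum n K w z)"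
  unfolding Hsum_def by (simp add: act_scal sum_distrib_left)

lemma hs_bound: assumes "finite S"
  shows "hs n K S T \<le> real (card S) + real K / 2"
proof -
  have "hs n K S T \<le> (\<Sum>j\<in>{1..K}. (if j \<in> S then 1 else 0) + 1/2)"
    unfolding hs_def by (intro sum_mono) (simp add: hr_def)
  also have "\<dots> = real (card ({1..K} \<inter> S)) + real K / 2"
    by (simp add: sum.distrib sum.inter_restrict[symmetric])
  also have "real (card ({1..K} \<inter> S)) \<le> real (card S)"
    using assms by (simp add: card_mono)
  finally show ?thesis by simp
qed

theorem lemma4p5:
  fixes n m i :: nat
    and C :: "(nat set \<times> nat set \<Rightarrow> complex) set"
    and p :: "(nat set \<times> nat set \<Rightarrow> complex) \<Rightarrow> (nat set \<times> nat set \<Rightarrow> complex)"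
  assumes "n = 2 * m"
    and "1 \<le> i" and "i \<le> m - 1"
    and "cartan_component n (n - 2 * i - 1) C"
    and "equiv_proj n (n - 2 * i - 1) C p"
  shows "p (psi n m i) = (\<lambda>_. 0)"
proof -
  define K where "K = n - 2 * i - 1"
  define r where "r = 2 * (m - i - 1)"
  have ep: "equiv_proj n K C p" using assms(5) K_def by simp
  have cc: "cartan_component n K C" using assms(4) K_def by simp
  have rK: "Suc r = K" and K1: "1 \<le> K" and Kn: "K + 2 \<le> n" using assms(1-3) unfolding K_def r_def by auto
  define W' where "W' = Wg n r False"
  define D where "D = {y. \<exists>x\<in>W'. y = p (Eop n x)}"
  have EW: "x \<in> W' \<Longrightarrow> Eop n x \<in> Wmod n K" for x
    unfolding W'_def Wmod_Wg using Eop_Wg rK by blast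
  have sub: "subsp D"
    unfolding subsp_def
  proof (intro conjI ballI allI)
    have "(\<lambda>_. 0) = p (Eop n (\<lambda>_. 0))" using lin_zero[OF lin_Eop, of n] p_zero[OF ep] by simp
    moreover have "(\<lambda>_. 0) \<in> W'" unfolding W'_def by (rule Wg_zero)
    ultimately show "(\<lambda>_. 0) \<in> D" unfolding D_def by blast
  next
    fix y1 y2 assume "y1 \<in> D" "y2 \<in> D"
    then obtain x1 x2 where x: "x1 \<in> W'" "x2 \<in> W'" "y1 = p (Eop n x1)" "y2 = p (Eop n x2)"
      unfolding D_def by blast
    have "(\<lambda>z. y1 z + y2 z) = p (\<lambda>z. Eop n x1 z + Eop n x2 z)"
      using p_add[OF ep EW[OF x(1)] EW[OF x(2)]] x by simp
    also have "(\<lambda>z. Eop n x1 z + Eop n x2 z) = Eop n (\<lambda>z. x1 z + x2 z)"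
      by (simp add: lin_add[OF lin_Eop])
    finally show "(\<lambda>z. y1 z + y2 z) \<in> D" unfolding D_def using Wg_add x(1,2) unfolding W'_def by blast
  next
    fix c y assume "y \<in> D"
    then obtain x where x: "x \<in> W'" "y = p (Eop n x)" unfolding D_def by blast
    have "(\<lambda>z. c * y z) = p (\<lambda>z. c * Eop n x z)"
      using p_scal[OF ep EW[OF x(1)]] x by simp
    also have "(\<lambda>z. c * Eop n x z) = Eop n (\<lambda>z. c * x z)"
      by (simp add: lin_scal[OF lin_Eop])
    finally have e: "(\<lambda>z. c * y z) = p (Eop n (\<lambda>z. c * x z))" .
    have "(\<lambda>z. c * x z) \<in> W'" using x(1) unfolding W'_def by (rule Wg_mult[where f="\<lambda>_. c"]) simp
    then show "(\<lambda>z. c * y z) \<in> D" unfolding D_def using e by blast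
  qed
  have DC: "D \<subseteq> C" unfolding D_def using p_C[OF ep] EW by blast
  have inv: "invariant n D"
    unfolding invariant_def
  proof (intro ballI)
    fix a b y assume ab: "a \<in> {1..2*n}" "b \<in> {1..2*n}" and "y \<in> D"
    then obtain x where x: "x \<in> W'" "y = p (Eop n x)" unfolding D_def by blast
    have "act n a b y = p (Eop n (act n a b x))"
      using x p_act[OF ep ab EW[OF x(1)]] E_equiv[OF ab] by simp
    moreover have "act n a b x \<in> W'" using act_Wg[OF ab] x(1) unfolding W'_def by blast
    ultimately show "act n a b y \<in> D" unfolding D_def by blast
  qed
  have psiD: "p (psi n m i) \<in> D"
    unfolding D_def psi_eq W'_def r_def using phi_Wg by blast
  have irr: "D = {\<lambda>_. 0} \<or> D = C"
    using cc sub DC inv unfolding cartan_component_def irred_hw_submodule_def by blast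
  show ?thesis
  proof (cases "D = {\<lambda>_. 0}")
    case True then show ?thesis using psiD by auto
  next
    case False
    then have DeqC: "D = C" using irr by blast
    obtain v where vC: "v \<in> C" and hw: "hw_vector n (\<lambda>j. omegaD n (n - 1) j + omegaD n K j) v"
      using cc unfolding cartan_component_def irred_hw_submodule_def by blast
    obtain x where x: "x \<in> W'" "v = p (Eop n x)" using vC DeqC unfolding D_def by blast
    define Vals where "Vals = (\<lambda>(S,T). complex_of_real (hs n K S T)) ` {(S,T). S \<subseteq> {1..2*n} \<and> card S = r \<and> T \<subseteq> {1..n}}"
    have fV: "finite Vals"
    proof -
      have "{(S,T). S \<subseteq> {1..2*n} \<and> card S = r \<and> T \<subseteq> {1..n}} \<subseteq> Pow {1..2*n} \<times> Pow {1..n}" by auto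
      then have "finite {(S,T). S \<subseteq> {1..2*n} \<and> card S = r \<and> T \<subseteq> {1..n}}"
        by (rule finite_subset) simp
      then show ?thesis unfolding Vals_def by simp
    qed
    obtain cs where cs: "set cs = Vals" using finite_list[OF fV] by blast
    define L where "L = complex_of_real (3 / 2 * real K)"
    have LV: "L \<notin> Vals"
    proof
      assume "L \<in> Vals"
      then obtain S T where ST: "S \<subseteq> {1..2*n}" "card S = r" and eq: "L = complex_of_real (hs n K S T)"
        unfolding Vals_def by auto
      have fS: "finite S" using ST(1) finite_subset by blast
      have "3 / 2 * real K = hs n K S T" using eq unfolding L_def of_real_eq_iff .
      moreover have "hs n K S T \<le> real r + real K / 2" using hs_bound[OF fS] ST(2) by simp
      ultimately show False using rK by simp
    qed
    have lam: "omegaD n (n - 1) j + omegaD n K j = 3/2" if "j \<in> {1..K}" for j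
      using that Kn unfolding omegaD_def by auto
    have Hv: "Hsum n K v = (\<lambda>z. L * v z)"
    proof
      fix z
      have "Hsum n K v z = (\<Sum>j\<in>{1..K}. (omegaD n (n - 1) j + omegaD n K j) * v z)"
        unfolding Hsum_def using hw Kn unfolding hw_vector_def by (intro sum.cong refl) auto
      also have "\<dots> = (\<Sum>j\<in>{1..K}. 3/2 * v z)" by (rule sum.cong[OF refl], subst lam) auto
      also have "\<dots> = L * v z" unfolding L_def by simp
      finally show "Hsum n K v z = L * v z" .
    qed
    have Qv: "Qs n K cs' v = (\<lambda>z. (\<Prod>c\<leftarrow>cs'. L - c) * v z)" for cs'
    proof (induction cs')
      case Nil then show ?case by simp
    next
      case (Cons c cs')
      have "Hsum n K (\<lambda>z. (\<Prod>c\<leftarrow>cs'. L - c) * v z) = (\<lambda>z. (\<Prod>c\<leftarrow>cs'. L - c) * Hsum n K v z)"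
        by (rule Hsum_scal)
      then show ?case using Cons by (simp add: Hv algebra_simps)
    qed
    have Kn': "K \<le> n" using Kn by simp
    have Qx: "Qs n K cs x = (\<lambda>_. 0)"
    proof
      fix z
      obtain S T :: "nat set" where z: "z = (S,T)" by fastforce
      show "Qs n K cs x z = 0"
      proof (cases "x (S,T) = 0")
        case True then show ?thesis using z by (simp add: Qs_diag[OF Kn'])
      next
        case False
        then have "S \<subseteq> {1..2*n}" "card S = r" "T \<subseteq> {1..n}" using x(1) unfolding W'_def Wg_def by auto
        then have "complex_of_real (hs n K S T) \<in> set cs" unfolding cs Vals_def by auto
        then have "(\<Prod>c\<leftarrow>cs. complex_of_real (hs n K S T) - c) = 0"
          by (simp add: prod_list_zero_iff)
        then show ?thesis using z by (simp add: Qs_diag[OF Kn'])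
      qed
    qed
    have "Qs n K cs v = p (Eop n (Qs n K cs x))"
      using x p_Qs[OF ep Kn' EW[OF x(1)]] Qs_Eop[OF Kn'] by simp
    also have "\<dots> = (\<lambda>_. 0)" using Qx lin_zero[OF lin_Eop, of n] p_zero[OF ep] by simp
    finally have "(\<lambda>z. (\<Prod>c\<leftarrow>cs. L - c) * v z) = (\<lambda>_. 0)" using Qv by simp
    moreover have "(\<Prod>c\<leftarrow>cs. L - c) \<noteq> 0" using LV cs by (auto simp: prod_list_zero_iff)
    ultimately have "v = (\<lambda>_. 0)" by (auto simp: fun_eq_iff)
    then show ?thesis using hw unfolding hw_vector_def by blast
  qed
qed


end
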